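(* Let $G$ and $H$ be finite connected free graphs. If there exists an onto edge homomorphism from $G$ to $H$, then $\phi(G)\le \phi(H)$.
   Context: All graphs are finite and simple. A homomorphism $f:G\to H$ is a map $f:V(G)\to V(H)$ such that $uv\in E(G)$ implies $f(u)f(v)\in E(H)$; it is an onto edge homomorphism if every edge of $H$ equals $f(x)f(y)$ for some edge $xy\in E(G)$. An independent set of a graph $G$ is called a free independent set if it is contained in at least two distinct maximal independent sets of $G$. A graph $G$ is free if every vertex of $G$ lies in some free independent set. The free chromatic number $\phi(G)$ is the minimum positive integer $t$ such that $V(G)=V_1\cup\cdots\cup V_t$ is a partition of $V(G)$ into sets each of which is a free independent set of $G$; if $G$ is not free, $\phi(G)=\infty$. *)

theory Defs
  imports Main "HOL-Library.Disjoint_Sets" "HOL-Library.Extended_Nat"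
begin

definition fin_simple_graph :: "'a set \<Rightarrow> ('a \<Rightarrow> 'a \<Rightarrow> bool) \<Rightarrow> bool" where
  "fin_simple_graph V E \<longleftrightarrow> finite V \<and>
     (\<forall>x y. E x y \<longrightarrow> x \<in> V \<and> y \<in> V \<and> x \<noteq> y \<and> E y x)"

definition graph_connected :: "'a set \<Rightarrow> ('a \<Rightarrow> 'a \<Rightarrow> bool) \<Rightarrow> bool" where
  "graph_connected V E \<longleftrightarrow> V \<noteq> {} \<and> (\<forall>u\<in>V. \<forall>v\<in>V. E\<^sup>*\<^sup>* u v)"

definition graph_hom :: "'a set \<Rightarrow> ('a \<Rightarrow> 'a \<Rightarrow> bool) \<Rightarrow> 'b set \<Rightarrow> ('b \<Rightarrow> 'b \<Rightarrow> bool) \<Rightarrow> ('a \<Rightarrow> 'b) \<Rightarrow> bool" where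
  "graph_hom VG EG VH EH f \<longleftrightarrow> (\<forall>v\<in>VG. f v \<in> VH) \<and> (\<forall>u v. EG u v \<longrightarrow> EH (f u) (f v))"

definition onto_edge_hom :: "'a set \<Rightarrow> ('a \<Rightarrow> 'a \<Rightarrow> bool) \<Rightarrow> 'b set \<Rightarrow> ('b \<Rightarrow> 'b \<Rightarrow> bool) \<Rightarrow> ('a \<Rightarrow> 'b) \<Rightarrow> bool" where
  "onto_edge_hom VG EG VH EH f \<longleftrightarrow> graph_hom VG EG VH EH f \<and>
     (\<forall>a b. EH a b \<longrightarrow> (\<exists>x y. EG x y \<and> {f x, f y} = {a, b}))"

definition indep_set :: "'a set \<Rightarrow> ('a \<Rightarrow> 'a \<Rightarrow> bool) \<Rightarrow> 'a set \<Rightarrow> bool" where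
  "indep_set V E S \<longleftrightarrow> S \<subseteq> V \<and> (\<forall>x\<in>S. \<forall>y\<in>S. \<not> E x y)"

definition max_indep_set :: "'a set \<Rightarrow> ('a \<Rightarrow> 'a \<Rightarrow> bool) \<Rightarrow> 'a set \<Rightarrow> bool" where
  "max_indep_set V E S \<longleftrightarrow> indep_set V E S \<and> (\<forall>T. indep_set V E T \<and> S \<subseteq> T \<longrightarrow> T = S)"

definition free_indep_set :: "'a set \<Rightarrow> ('a \<Rightarrow> 'a \<Rightarrow> bool) \<Rightarrow> 'a set \<Rightarrow> bool" where
  "free_indep_set V E S \<longleftrightarrow> indep_set V E S \<and>
     (\<exists>M1 M2. M1 \<noteq> M2 \<and> max_indep_set V E M1 \<and> max_indep_set V E M2 \<and> S \<subseteq> M1 \<and> S \<subseteq> M2)"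

definition free_graph :: "'a set \<Rightarrow> ('a \<Rightarrow> 'a \<Rightarrow> bool) \<Rightarrow> bool" where
  "free_graph V E \<longleftrightarrow> (\<forall>v\<in>V. \<exists>S. free_indep_set V E S \<and> v \<in> S)"

text \<open>Free chromatic number: minimum number of blocks of a partition of V into
  free independent sets; infinity if no such partition exists (Inf of empty set).\<close>
definition free_chromatic_number :: "'a set \<Rightarrow> ('a \<Rightarrow> 'a \<Rightarrow> bool) \<Rightarrow> enat" where
  "free_chromatic_number V E =
     (INF P \<in> {P. partition_on V P \<and> (\<forall>S\<in>P. free_indep_set V E S)}. enat (card P))"

end

theory Submission
  imports Defs
begin

lemma extend_max:
  assumes "finite V" "indep_set V E S"
  shows "\<exists>M. max_indep_set V E M \<and> S \<subseteq> M"
  using assms(2)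
proof (induction "card (V - S)" arbitrary: S rule: less_induct)
  case less
  show ?case
  proof (cases "max_indep_set V E S")
    case True then show ?thesis by blast
  next
    case False
    then obtain T where T: "indep_set V E T" "S \<subseteq> T" "T \<noteq> S"
      using less.prems unfolding max_indep_set_def by blast
    have "T \<subseteq> V" "S \<subseteq> V" using T less.prems unfolding indep_set_def by auto
    hence "V - T \<subset> V - S" using T by blast
    hence "card (V - T) < card (V - S)" using assms(1) by (meson finite_Diff psubset_card_mono)
    from less.hyps[OF this T(1)] T(2) show ?thesis by blast
  qed
qed

lemma pull_free:
  assumes fin: "finite VG" and hom: "onto_edge_hom VG EG VH EH f"
    and inG: "\<And>x y. EG x y \<Longrightarrow> x \<in> VG \<and> y \<in> VG"
    and fr: "free_indep_set VH EH S"
  shows "free_indep_set VG EG (VG \<inter> f -` S)"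
proof -
  from fr obtain M1 M2 where M: "M1 \<noteq> M2" "max_indep_set VH EH M1" "max_indep_set VH EH M2"
    "S \<subseteq> M1" "S \<subseteq> M2" unfolding free_indep_set_def by blast
  have gh: "\<And>u v. EG u v \<Longrightarrow> EH (f u) (f v)" and fV: "\<And>v. v \<in> VG \<Longrightarrow> f v \<in> VH"
    using hom unfolding onto_edge_hom_def graph_hom_def by auto
  have pre: "indep_set VG EG (VG \<inter> f -` T)" if "indep_set VH EH T" for T
    using that gh unfolding indep_set_def by blast
  have "\<not> indep_set VH EH (M1 \<union> M2)"
  proof
    assume "indep_set VH EH (M1 \<union> M2)"
    hence "M1 \<union> M2 = M1" "M1 \<union> M2 = M2" using M unfolding max_indep_set_def by blast+
    thus False using M(1) by simp
  qed
  moreover have I1: "indep_set VH EH M1" and I2: "indep_set VH EH M2"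
    using M unfolding max_indep_set_def by auto
  ultimately obtain a b where ab: "(a \<in> M1 \<and> b \<in> M2) \<or> (a \<in> M2 \<and> b \<in> M1)" "EH a b"
    unfolding indep_set_def by blast
  obtain x y where xy: "EG x y" "{f x, f y} = {a, b}" using hom ab(2) unfolding onto_edge_hom_def by blast
  obtain N1 where N1: "max_indep_set VG EG N1" "VG \<inter> f -` M1 \<subseteq> N1"
    using extend_max[OF fin pre[OF I1]] by blast
  obtain N2 where N2: "max_indep_set VG EG N2" "VG \<inter> f -` M2 \<subseteq> N2"
    using extend_max[OF fin pre[OF I2]] by blast
  have xyV: "x \<in> VG" "y \<in> VG" using inG xy(1) by auto
  have "N1 \<noteq> N2"
  proof
    assume "N1 = N2"
    moreover have "(x \<in> N1 \<and> y \<in> N2) \<or> (y \<in> N1 \<and> x \<in> N2)"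
      using xy(2) ab N1 N2 xyV by (auto simp: doubleton_eq_iff)
    ultimately show False using N1 xy(1) unfolding max_indep_set_def indep_set_def by blast
  qed
  moreover have "VG \<inter> f -` S \<subseteq> N1" "VG \<inter> f -` S \<subseteq> N2" using N1 N2 M by blast+
  moreover have "indep_set VG EG (VG \<inter> f -` S)" using pre fr unfolding free_indep_set_def by blast
  ultimately show ?thesis unfolding free_indep_set_def using N1 N2 by blast
qed

lemma surj_vert:
  assumes hom: "onto_edge_hom VG EG VH EH f" and con: "graph_connected VH EH"
    and fr: "free_graph VH EH" and v: "v \<in> VH"
    and sH: "fin_simple_graph VH EH" and sG: "fin_simple_graph VG EG"
  shows "\<exists>x\<in>VG. f x = v"
proof -
  from fr v obtain S where "free_indep_set VH EH S" unfolding free_graph_def by blast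
  then obtain M1 M2 where M: "M1 \<noteq> M2" "max_indep_set VH EH M1" "max_indep_set VH EH M2"
    unfolding free_indep_set_def by blast
  have "\<not> indep_set VH EH (M1 \<union> M2)"
  proof
    assume "indep_set VH EH (M1 \<union> M2)"
    hence "M1 \<union> M2 = M1" "M1 \<union> M2 = M2" using M unfolding max_indep_set_def by blast+
    thus False using M(1) by simp
  qed
  moreover have "M1 \<union> M2 \<subseteq> VH" using M unfolding max_indep_set_def indep_set_def by blast
  ultimately obtain a b where ab: "a \<in> VH" "b \<in> VH" "EH a b"
    unfolding indep_set_def by blast
  have anb: "a \<noteq> b" using ab sH unfolding fin_simple_graph_def by blast
  have "\<exists>w. EH v w"
  proof (cases "v = a")
    case True then show ?thesis using ab by blast
  next
    case False
    have "EH\<^sup>*\<^sup>* v a" using con v ab unfolding graph_connected_def by blast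
    then show ?thesis using False by (metis converse_rtranclpE)
  qed
  then obtain w where "EH v w" by blast
  then obtain x y where xy: "EG x y" "{f x, f y} = {v, w}" using hom unfolding onto_edge_hom_def by blast
  have "x \<in> VG \<and> y \<in> VG" using sG xy(1) unfolding fin_simple_graph_def by blast
  then show ?thesis using xy(2) by (metis doubleton_eq_iff)
qed

theorem mainTheorem1:
  fixes VG :: "'a set" and EG :: "'a \<Rightarrow> 'a \<Rightarrow> bool"
    and VH :: "'b set" and EH :: "'b \<Rightarrow> 'b \<Rightarrow> bool"
  assumes "fin_simple_graph VG EG" and "graph_connected VG EG" and "free_graph VG EG"
    and "fin_simple_graph VH EH" and "graph_connected VH EH" and "free_graph VH EH"
    and "\<exists>f. onto_edge_hom VG EG VH EH f"
  shows "free_chromatic_number VG EG \<le> free_chromatic_number VH EH"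
proof -
  obtain f where hom: "onto_edge_hom VG EG VH EH f" using assms(7) by blast
  have finG: "finite VG" and finH: "finite VH" using assms(1,4) unfolding fin_simple_graph_def by auto
  have inG: "\<And>x y. EG x y \<Longrightarrow> x \<in> VG \<and> y \<in> VG" using assms(1) unfolding fin_simple_graph_def by blast
  have fV: "\<And>v. v \<in> VG \<Longrightarrow> f v \<in> VH"
    using hom unfolding onto_edge_hom_def graph_hom_def by auto
  show ?thesis
    unfolding free_chromatic_number_def
  proof (rule INF_greatest)
    fix P assume "P \<in> {P. partition_on VH P \<and> (\<forall>S\<in>P. free_indep_set VH EH S)}"
    hence P: "partition_on VH P" "\<And>S. S \<in> P \<Longrightarrow> free_indep_set VH EH S" by auto
    define Q where "Q = (\<lambda>S. VG \<inter> f -` S) ` P"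
    have finP: "finite P" using P(1) finH
      by (metis finite_UnionD partition_onD1)
    have cQ: "card Q \<le> card P" unfolding Q_def using finP by (rule card_image_le)
    have "partition_on VG Q"
    proof (rule partition_onI)
      show "\<Union>Q = VG" using partition_onD1[OF P(1)] fV unfolding Q_def by blast
    next
      fix p q assume "p \<in> Q" "q \<in> Q" "p \<noteq> q"
      then obtain S T where "S \<in> P" "T \<in> P" "p = VG \<inter> f -` S" "q = VG \<inter> f -` T" "S \<noteq> T"
        unfolding Q_def by blast
      moreover have "S \<inter> T = {}" using partition_onD2[OF P(1)] calculation
        by (meson disjointD)
      ultimately show "disjnt p q" unfolding disjnt_def by blast
    next
      show "{} \<notin> Q"
      proof
        assume "{} \<in> Q"
        then obtain S where S: "S \<in> P" "VG \<inter> f -` S = {}" unfolding Q_def by blast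
        obtain v where "v \<in> S" using S(1) partition_onD3[OF P(1)] by (metis all_not_in_conv)
        hence "v \<in> VH" using S(1) partition_onD1[OF P(1)] by blast
        then obtain x where "x \<in> VG" "f x = v" using surj_vert[OF hom assms(5,6) _ assms(4,1)] by blast
        thus False using S \<open>v \<in> S\<close> by blast
      qed
    qed
    moreover have "\<forall>S\<in>Q. free_indep_set VG EG S"
      unfolding Q_def using pull_free[OF finG hom inG P(2)] by blast
    ultimately have "(INF P \<in> {P. partition_on VG P \<and> (\<forall>S\<in>P. free_indep_set VG EG S)}. enat (card P)) \<le> enat (card Q)"
      by (intro INF_lower) auto
    also have "\<dots> \<le> enat (card P)" using cQ by simp
    finally show "(INF P \<in> {P. partition_on VG P \<and> (\<forall>S\<in>P. free_indep_set VG EG S)}. enat (card P)) \<le> enat (card P)" .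
  qed
qed

end
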